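(* For any pair $(n,k)\in\mathbb{N}\times\mathbb{N}$: (a) if $(n,k)$ is extremely good, then the greedy algorithm is completely universally optimal on $(n,k)$; (b) if $(n,k)$ is good, then the greedy algorithm is universally optimal on $(n,k)$.
   Context: All graphs are undirected and unweighted. For a graph $G=(V,E)$ and integer $k$, a $k$-spanner of $G$ is a subgraph $H=(V,E')$, $E'\subseteq E$, with $\mathrm{dist}_H(u,v)\le k\cdot\mathrm{dist}_G(u,v)$ for all $u,v\in V$. A minimum $k$-spanner is a $k$-spanner with the fewest edges. Girth = length of a shortest cycle ($+\infty$ if acyclic). The greedy algorithm on input $\langle G,k\rangle$ with total ordering $\sigma$ of $E$ starts from $H=(V,\emptyset)$ and processes edges in order $\sigma$, adding edge $(u,v)$ iff the current $\mathrm{dist}_H(u,v)>k$, and outputs the final $H$. A pair $(n,k)$ is extremely good if for every $n$-vertex graph all of its minimum $k$-spanners have girth at least $k+2$; good if for every $n$-vertex graph at least one of its minimum $k$-spanners has girth at least $k+2$. The greedy algorithm is completely universally optimal on $(n,k)$ if for every $n$-vertex graph $G$, every minimum $k$-spanner of $G$ is output by the greedy algorithm on input $\langle G,k\rangle$ for some edge ordering $\sigma$; it is universally optimal on $(n,k)$ if for every $n$-vertex graph $G$ some minimum $k$-spanner of $G$ is output by the greedy algorithm for some edge ordering $\sigma$. *)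

theory Defs
  imports Main "HOL-Library.Extended_Nat"
begin

definition graph_on :: "nat \<Rightarrow> nat set set \<Rightarrow> bool" where
  "graph_on n E \<longleftrightarrow> E \<subseteq> {{u, v} | u v. u < n \<and> v < n \<and> u \<noteq> v}"

definition walk :: "nat set set \<Rightarrow> nat list \<Rightarrow> bool" where
  "walk E xs \<longleftrightarrow> xs \<noteq> [] \<and> (\<forall>i. Suc i < length xs \<longrightarrow> {xs ! i, xs ! Suc i} \<in> E)"

text \<open>Graph distance (infinity if no path).\<close>
definition gdist :: "nat set set \<Rightarrow> nat \<Rightarrow> nat \<Rightarrow> enat" where
  "gdist E u v = Inf {enat (length xs - 1) | xs. walk E xs \<and> hd xs = u \<and> last xs = v}"

definition is_spanner :: "nat \<Rightarrow> nat \<Rightarrow> nat set set \<Rightarrow> nat set set \<Rightarrow> bool" where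
  "is_spanner n k E H \<longleftrightarrow> H \<subseteq> E \<and>
     (\<forall>u<n. \<forall>v<n. gdist E u v \<noteq> \<infinity> \<longrightarrow> gdist H u v \<le> enat k * gdist E u v)"

definition is_min_spanner :: "nat \<Rightarrow> nat \<Rightarrow> nat set set \<Rightarrow> nat set set \<Rightarrow> bool" where
  "is_min_spanner n k E H \<longleftrightarrow> is_spanner n k E H \<and>
     (\<forall>H'. is_spanner n k E H' \<longrightarrow> card H \<le> card H')"

definition is_cycle :: "nat set set \<Rightarrow> nat list \<Rightarrow> bool" where
  "is_cycle E vs \<longleftrightarrow> length vs \<ge> 3 \<and> distinct vs \<and> walk E vs \<and> {last vs, hd vs} \<in> E"

definition girth :: "nat set set \<Rightarrow> enat" where
  "girth E = Inf {enat (length vs) | vs. is_cycle E vs}"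

definition greedy_step :: "nat \<Rightarrow> nat set set \<Rightarrow> nat set \<Rightarrow> nat set set" where
  "greedy_step k H e = (if \<exists>u v. e = {u, v} \<and> enat k < gdist H u v then insert e H else H)"

definition greedy :: "nat \<Rightarrow> nat set list \<Rightarrow> nat set set" where
  "greedy k \<sigma> = foldl (greedy_step k) {} \<sigma>"

definition edge_ordering :: "nat set set \<Rightarrow> nat set list \<Rightarrow> bool" where
  "edge_ordering E \<sigma> \<longleftrightarrow> distinct \<sigma> \<and> set \<sigma> = E"

definition extremely_good :: "nat \<Rightarrow> nat \<Rightarrow> bool" where
  "extremely_good n k \<longleftrightarrow> (\<forall>E H. graph_on n E \<longrightarrow> is_min_spanner n k E H \<longrightarrow> enat (k + 2) \<le> girth H)"

definition good :: "nat \<Rightarrow> nat \<Rightarrow> bool" where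
  "good n k \<longleftrightarrow> (\<forall>E. graph_on n E \<longrightarrow> (\<exists>H. is_min_spanner n k E H \<and> enat (k + 2) \<le> girth H))"

definition greedy_completely_universally_optimal :: "nat \<Rightarrow> nat \<Rightarrow> bool" where
  "greedy_completely_universally_optimal n k \<longleftrightarrow>
     (\<forall>E H. graph_on n E \<longrightarrow> is_min_spanner n k E H \<longrightarrow> (\<exists>\<sigma>. edge_ordering E \<sigma> \<and> greedy k \<sigma> = H))"

definition greedy_universally_optimal :: "nat \<Rightarrow> nat \<Rightarrow> bool" where
  "greedy_universally_optimal n k \<longleftrightarrow>
     (\<forall>E. graph_on n E \<longrightarrow> (\<exists>H \<sigma>. is_min_spanner n k E H \<and> edge_ordering E \<sigma> \<and> greedy k \<sigma> = H))"

end

theory Submission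
  imports Defs
begin

lemma walk_single[simp]: "walk E [x]"
  unfolding walk_def by auto

lemma walk_cons2[simp]: "walk E (x # y # xs) \<longleftrightarrow> {x, y} \<in> E \<and> walk E (y # xs)"
proof
  assume h: "walk E (x # y # xs)"
  have "{x, y} \<in> E" using h unfolding walk_def by (metis length_Cons nth_Cons_0 nth_Cons_Suc zero_less_Suc Suc_less_eq)
  moreover have "walk E (y # xs)" unfolding walk_def
  proof (intro conjI allI impI)
    fix i assume "Suc i < length (y # xs)"
    then have "Suc (Suc i) < length (x # y # xs)" by simp
    then have "{(x # y # xs) ! Suc i, (x # y # xs) ! Suc (Suc i)} \<in> E" using h unfolding walk_def by blast
    then show "{(y # xs) ! i, (y # xs) ! Suc i} \<in> E" by simp
  qed simp
  ultimately show "{x, y} \<in> E \<and> walk E (y # xs)" by simp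
next
  assume h: "{x, y} \<in> E \<and> walk E (y # xs)"
  show "walk E (x # y # xs)" unfolding walk_def
  proof (intro conjI allI impI)
    fix i assume i: "Suc i < length (x # y # xs)"
    show "{(x # y # xs) ! i, (x # y # xs) ! Suc i} \<in> E"
    proof (cases i)
      case 0 then show ?thesis using h by simp
    next
      case (Suc j)
      then have "Suc j < length (y # xs)" using i by simp
      then have "{(y # xs) ! j, (y # xs) ! Suc j} \<in> E" using h unfolding walk_def by blast
      then show ?thesis using Suc by simp
    qed
  qed simp
qed

lemma walk_cons: "walk E (x # xs) \<Longrightarrow> xs \<noteq> [] \<Longrightarrow> walk E xs"
  by (cases xs) auto

lemma walk_suffix: "walk E (as @ bs) \<Longrightarrow> bs \<noteq> [] \<Longrightarrow> walk E bs"
proof (induction as)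
  case Nil then show ?case by simp
next
  case (Cons a as)
  then show ?case using walk_cons[of E a "as @ bs"] by simp
qed

lemma walk_mono: "walk G xs \<Longrightarrow> G \<subseteq> H \<Longrightarrow> walk H xs"
  unfolding walk_def by blast

lemma walk_distinct:
  "walk G xs \<Longrightarrow> \<exists>ys. walk G ys \<and> distinct ys \<and> hd ys = hd xs \<and> last ys = last xs \<and> length ys \<le> length xs"
proof (induction xs)
  case Nil then show ?case by (simp add: walk_def)
next
  case (Cons x xs)
  show ?case
  proof (cases xs)
    case Nil then show ?thesis by (intro exI[of _ "[x]"]) simp
  next
    case (Cons y zs)
    have wx: "walk G xs" using Cons.prems Cons by simp
    have exy: "{x, y} \<in> G" using Cons.prems Cons by simp
    obtain ys where ys: "walk G ys" "distinct ys" "hd ys = hd xs" "last ys = last xs" "length ys \<le> length xs"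
      using Cons.IH wx by blast
    have ysne: "ys \<noteq> []" using ys(1) by (simp add: walk_def)
    show ?thesis
    proof (cases "x \<in> set ys")
      case False
      obtain w ws where yw: "ys = w # ws" using ysne by (cases ys) auto
      have "w = y" using ys(3) yw Cons by simp
      then have "walk G (x # ys)" using yw exy ys(1) by simp
      then show ?thesis using False ys Cons ysne by (intro exI[of _ "x # ys"]) auto
    next
      case True
      then obtain as bs where ab: "ys = as @ x # bs" by (meson split_list)
      have "walk G (x # bs)" using walk_suffix[of G as "x # bs"] ys(1) ab by simp
      moreover have "distinct (x # bs)" using ys(2) ab by simp
      moreover have "last (x # bs) = last (x # xs)" using ys(4) ab Cons by simp
      moreover have "length (x # bs) \<le> length (x # xs)" using ys(5) ab by simp
      ultimately show ?thesis by (intro exI[of _ "x # bs"]) simp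
    qed
  qed
qed

lemma gdist_le_walk:
  assumes "gdist G u v \<le> enat k"
  shows "\<exists>xs. walk G xs \<and> hd xs = u \<and> last xs = v \<and> length xs - 1 \<le> k"
proof -
  let ?S = "{enat (length xs - 1) | xs. walk G xs \<and> hd xs = u \<and> last xs = v}"
  have ne: "?S \<noteq> {}"
  proof
    assume "?S = {}"
    have "gdist G u v = Inf ?S" unfolding gdist_def by simp
    also have "\<dots> = \<infinity>" by (subst \<open>?S = {}\<close>) (simp add: top_enat_def)
    finally have "gdist G u v = \<infinity>" .
    then show False using assms by simp
  qed
  obtain y where y: "y \<in> ?S" using ne by blast
  have L: "(LEAST x. x \<in> ?S) \<in> ?S" using y by (rule LeastI)
  have "Inf ?S = (LEAST x. x \<in> ?S)" by (simp only: Inf_enat_def ne if_False)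
  with L have "Inf ?S \<in> ?S" by simp
  then obtain xs where xs: "walk G xs" "hd xs = u" "last xs = v" "gdist G u v = enat (length xs - 1)"
    unfolding gdist_def by auto
  then show ?thesis using assms by auto
qed

lemma key:
  assumes x: "{u, v} \<in> H" and uv: "u \<noteq> v" and G: "G \<subseteq> H - {{u, v}}"
    and gir: "enat (k + 2) \<le> girth H"
  shows "\<not> gdist G u v \<le> enat k"
proof
  assume "gdist G u v \<le> enat k"
  then obtain xs where xs: "walk G xs" "hd xs = u" "last xs = v" "length xs - 1 \<le> k"
    using gdist_le_walk by blast
  obtain ys where ys: "walk G ys" "distinct ys" "hd ys = u" "last ys = v" "length ys \<le> length xs"
    using walk_distinct[OF xs(1)] xs by auto
  have ysne: "ys \<noteq> []" using ys(1) by (simp add: walk_def)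
  have len2: "length ys \<ge> 2"
  proof (rule ccontr)
    assume "\<not> length ys \<ge> 2"
    then obtain w where "ys = [w]" using ysne by (cases ys; cases "tl ys") auto
    then show False using ys uv by simp
  qed
  show False
  proof (cases "length ys = 2")
    case True
    then obtain a b where "ys = [a, b]"
      by (metis One_nat_def Suc_1 length_0_conv length_Suc_conv)
    then have "{u, v} \<in> G" using ys by simp
    then show False using G by blast
  next
    case False
    have "is_cycle H ys" unfolding is_cycle_def
      using False len2 ys walk_mono[OF ys(1)] G x by (auto simp: insert_commute)
    then have "girth H \<le> enat (length ys)" unfolding girth_def by (auto intro: Inf_lower)
    then have "enat (k + 2) \<le> enat (length ys)" using gir order_trans by blast
    then show False using ys(5) xs(4) len2 by simp
  qed
qed

lemma edge_form: "graph_on n E \<Longrightarrow> x \<in> E \<Longrightarrow> \<exists>a b. x = {a, b} \<and> a \<noteq> b \<and> a < n \<and> b < n"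
  unfolding graph_on_def by blast

lemma fold_H:
  assumes gE: "graph_on n E" and HE: "H \<subseteq> E" and gir: "enat (k + 2) \<le> girth H"
  shows "distinct xs \<Longrightarrow> set xs \<subseteq> H \<Longrightarrow> G \<subseteq> H \<Longrightarrow> G \<inter> set xs = {} \<Longrightarrow>
     foldl (greedy_step k) G xs = G \<union> set xs"
proof (induction xs arbitrary: G)
  case Nil then show ?case by simp
next
  case (Cons x xs)
  have xH: "x \<in> H" using Cons.prems by simp
  obtain a b where ab: "x = {a, b}" "a \<noteq> b" using edge_form[OF gE] xH HE by blast
  have "G \<subseteq> H - {{a, b}}" using Cons.prems ab by auto
  then have "\<not> gdist G a b \<le> enat k" using key[of a b H G k] xH ab gir by simp
  then have "enat k < gdist G a b" by (simp add: not_le)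
  then have ex: "\<exists>u v. x = {u, v} \<and> enat k < gdist G u v" using ab by blast
  then have "greedy_step k G x = insert x G" unfolding greedy_step_def by (simp only: if_True)
  moreover have "foldl (greedy_step k) (insert x G) xs = insert x G \<union> set xs"
    using Cons.IH[of "insert x G"] Cons.prems xH by auto
  ultimately show ?case by simp
qed

lemma gdist_edge_le1: "{u, v} \<in> E \<Longrightarrow> gdist E u v \<le> 1"
proof -
  assume "{u, v} \<in> E"
  then have "walk E [u, v]" by simp
  then have "enat (length [u, v] - 1) \<in> {enat (length xs - 1) | xs. walk E xs \<and> hd xs = u \<and> last xs = v}"
    by fastforce
  then show ?thesis unfolding gdist_def
    by (metis (no_types, lifting) Inf_lower One_nat_def diff_Suc_1 enat_1 length_Cons list.size(3))
qed

lemma fold_rest: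
  assumes gE: "graph_on n E" and sp: "is_spanner n k E H"
  shows "set xs \<subseteq> E \<Longrightarrow> foldl (greedy_step k) H xs = H"
proof (induction xs)
  case Nil then show ?case by simp
next
  case (Cons x xs)
  have "x \<in> E" using Cons.prems by simp
  have "greedy_step k H x = H"
  proof -
    have "\<not> enat k < gdist H u v" if "x = {u, v}" for u v
    proof -
      obtain a b where ab: "x = {a, b}" "a \<noteq> b" "a < n" "b < n" using edge_form[OF gE \<open>x \<in> E\<close>] by blast
      have uv: "u < n" "v < n" using ab that by (auto simp: doubleton_eq_iff)
      have e: "{u, v} \<in> E" using \<open>x \<in> E\<close> that by simp
      have d1: "gdist E u v \<le> 1" using gdist_edge_le1[OF e] .
      then have fin: "gdist E u v \<noteq> \<infinity>" by (cases "gdist E u v") (auto simp: one_enat_def)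
      have "gdist H u v \<le> enat k * gdist E u v" using sp uv fin unfolding is_spanner_def by blast
      also have "\<dots> \<le> enat k * 1" using d1 by (intro mult_left_mono) auto
      finally show ?thesis by simp
    qed
    then show ?thesis unfolding greedy_step_def by auto
  qed
  then show ?case using Cons by simp
qed

lemma main:
  assumes gE: "graph_on n E" and sp: "is_spanner n k E H" and gir: "enat (k + 2) \<le> girth H"
  shows "\<exists>\<sigma>. edge_ordering E \<sigma> \<and> greedy k \<sigma> = H"
proof -
  have finE: "finite E"
  proof (rule finite_subset)
    show "E \<subseteq> (\<lambda>(u, v). {u, v}) ` ({..<n} \<times> {..<n})" using gE unfolding graph_on_def by auto
  qed simp
  have HE: "H \<subseteq> E" using sp unfolding is_spanner_def by simp
  obtain xs1 where x1: "set xs1 = H" "distinct xs1" using finite_distinct_list finite_subset[OF HE finE] by blast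
  obtain xs2 where x2: "set xs2 = E - H" "distinct xs2" using finite_distinct_list finE by blast
  have "edge_ordering E (xs1 @ xs2)" unfolding edge_ordering_def using x1 x2 HE by auto
  moreover have "greedy k (xs1 @ xs2) = H"
  proof -
    have "foldl (greedy_step k) {} xs1 = H" using fold_H[OF gE HE gir, of xs1 "{}"] x1 by simp
    then show ?thesis unfolding greedy_def using fold_rest[OF gE sp, of xs2] x2 by simp
  qed
  ultimately show ?thesis by blast
qed

theorem corollary1p5:
  fixes n k :: nat
  shows "(extremely_good n k \<longrightarrow> greedy_completely_universally_optimal n k) \<and>
         (good n k \<longrightarrow> greedy_universally_optimal n k)"
  unfolding extremely_good_def good_def greedy_completely_universally_optimal_def
    greedy_universally_optimal_def is_min_spanner_def
  using main by metis

end
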